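(* Let $I\subset\mathbb R$ be a bounded closed non-degenerate interval, $r_0>1$, and $f,f_n\in L^{r_0}(I)$ ($n\in\mathbb N$) with $f_n\to f$ in $L^{r_0}(I)$. Then $\tau_r^{f_n}\to\tau_r^f$ locally uniformly in $r\in]1,r_0]$, i.e. uniformly on $[s,r_0]$ for every $1<s<r_0$.
   Context: For $g\in L^r(I)$ with $r>1$, $\tau_r^g$ denotes the unique real number minimizing $t\mapsto\|g-t\|_{L^r(I)}$. *)

theory Defs
  imports "HOL-Analysis.Analysis"
begin

text \<open>The interval I = {a..b}; functions are real-valued on the reals, only their
  values on I matter. L^r(I) membership: Lebesgue measurable on I and |g|^r integrable on I.\<close>

definition in_Lr :: "real \<Rightarrow> real \<Rightarrow> real \<Rightarrow> (real \<Rightarrow> real) \<Rightarrow> bool" where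
  "in_Lr a b r g \<longleftrightarrow> set_borel_measurable lebesgue {a..b} g
      \<and> set_integrable lebesgue {a..b} (\<lambda>x. \<bar>g x\<bar> powr r)"

definition Lr_norm :: "real \<Rightarrow> real \<Rightarrow> real \<Rightarrow> (real \<Rightarrow> real) \<Rightarrow> real" where
  "Lr_norm a b r g = (\<integral>x\<in>{a..b}. \<bar>g x\<bar> powr r \<partial>lebesgue) powr (1 / r)"

definition tau :: "real \<Rightarrow> real \<Rightarrow> real \<Rightarrow> (real \<Rightarrow> real) \<Rightarrow> real" where
  "tau a b r g = (THE t. \<forall>u. Lr_norm a b r (\<lambda>x. g x - t) \<le> Lr_norm a b r (\<lambda>x. g x - u))"

end

theory Submission
  imports Defs
begin


lemma powr_mvt_aux:
  fixes u v r :: real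
  assumes "0 < u" "u < v" "r > 0"
  shows "\<exists>z. u < z \<and> z < v \<and> v powr r - u powr r = (v - u) * (r * z powr (r - 1))"
proof -
  have d: "\<And>x. x > 0 \<Longrightarrow> ((\<lambda>z. z powr r) has_real_derivative r * x powr (r - 1)) (at x)"
    by (rule has_real_derivative_powr) auto
  have c: "continuous_on {u..v} (\<lambda>z. z powr r)"
    using assms by (intro continuous_at_imp_continuous_on ballI DERIV_isCont[OF d]) auto
  obtain l z where z: "u < z" "z < v" "DERIV (\<lambda>z. z powr r) z :> l" "v powr r - u powr r = (v - u) * l"
    using MVT[OF assms(2) c] d assms real_differentiable_def by (metis less_trans)
  have "l = r * z powr (r - 1)" using DERIV_unique[OF z(3) d] z assms by auto
  thus ?thesis using z by auto
qed

lemma powr_strict_mid_pos: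
  fixes u v r :: real
  assumes "0 \<le> u" "u < v" "r > 1"
  shows "((u + v) / 2) powr r < (u powr r + v powr r) / 2"
proof (cases "u = 0")
  case True
  have "(v/2) powr r = v powr r / 2 powr r" using assms by (simp add: powr_divide)
  moreover have "2 powr r > 2 powr 1" using assms by (intro powr_less_mono) auto
  moreover have "v powr r > 0" using assms by auto
  moreover have "v powr r / 2 powr r < v powr r / 2"
    using calculation by (intro divide_strict_left_mono) auto
  ultimately show ?thesis using True by simp
next
  case False
  define m where "m = (u + v) / 2"
  have um: "0 < u" "u < m" "m < v" using assms False unfolding m_def by auto
  obtain z1 where z1: "u < z1" "z1 < m" "m powr r - u powr r = (m - u) * (r * z1 powr (r - 1))"
    using powr_mvt_aux[of u m r] um assms by auto
  obtain z2 where z2: "m < z2" "z2 < v" "v powr r - m powr r = (v - m) * (r * z2 powr (r - 1))"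
    using powr_mvt_aux[of m v r] um assms by auto
  have "z1 powr (r - 1) < z2 powr (r - 1)"
    using z1 z2 um assms by (intro powr_less_mono2) auto
  hence "r * z1 powr (r - 1) < r * z2 powr (r - 1)" using assms by auto
  moreover have "m - u = v - m" "m - u > 0" unfolding m_def using assms by (auto simp: field_simps)
  ultimately have "m powr r - u powr r < v powr r - m powr r"
    using z1 z2 by (metis mult_strict_left_mono)
  thus ?thesis unfolding m_def by (simp add: field_simps)
qed

lemma powr_strict_mid:
  fixes x y r :: real
  assumes "x \<noteq> y" "r > 1"
  shows "\<bar>(x + y) / 2\<bar> powr r < (\<bar>x\<bar> powr r + \<bar>y\<bar> powr r) / 2"
proof (cases "\<bar>x\<bar> = \<bar>y\<bar>")
  case True
  then have "y = - x" "x \<noteq> 0" using assms by (auto simp: abs_eq_iff)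
  then show ?thesis using assms by simp
next
  case False
  have le: "\<bar>(x + y) / 2\<bar> powr r \<le> ((\<bar>x\<bar> + \<bar>y\<bar>) / 2) powr r"
    using assms by (intro powr_mono2) auto
  show ?thesis
  proof (cases "\<bar>x\<bar> < \<bar>y\<bar>")
    case True
    then show ?thesis using le powr_strict_mid_pos[of "\<bar>x\<bar>" "\<bar>y\<bar>" r] assms by auto
  next
    case False
    then have "\<bar>y\<bar> < \<bar>x\<bar>" using \<open>\<bar>x\<bar> \<noteq> \<bar>y\<bar>\<close> by auto
    then show ?thesis using le powr_strict_mid_pos[of "\<bar>y\<bar>" "\<bar>x\<bar>" r] assms
      by (simp add: add.commute)
  qed
qed

lemma powr_split:
  fixes p q d r :: real
  assumes "0 \<le> p" "0 \<le> q" "0 < d" "0 \<le> r"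
  shows "(p + q) powr r \<le> (1 + d) powr r * p powr r + (1 + 1 / d) powr r * q powr r"
proof (cases "q \<le> d * p")
  case True
  have "(p + q) powr r \<le> ((1 + d) * p) powr r" using assms True
    by (intro powr_mono2) (auto simp: algebra_simps)
  also have "\<dots> = (1 + d) powr r * p powr r" using assms by (simp add: powr_mult)
  finally show ?thesis using assms by (smt (verit) mult_nonneg_nonneg powr_ge_zero)
next
  case False
  then have "p \<le> q / d" using assms by (simp add: field_simps)
  then have "p + q \<le> (1 + 1 / d) * q" using assms by (simp add: algebra_simps)
  then have "(p + q) powr r \<le> ((1 + 1 / d) * q) powr r" using assms
    by (intro powr_mono2) auto
  also have "\<dots> = (1 + 1 / d) powr r * q powr r" using assms by (simp add: powr_mult)
  finally show ?thesis using assms by (smt (verit) mult_nonneg_nonneg powr_ge_zero)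
qed

lemma powr_le_1_plus:
  fixes z r r0 :: real
  assumes "0 \<le> z" "0 \<le> r" "r \<le> r0"
  shows "z powr r \<le> 1 + z powr r0"
proof (cases "z \<le> 1")
  case True
  then have "z powr r \<le> 1" using assms by (intro powr_le1) auto
  then show ?thesis by (smt (verit) powr_ge_zero)
next
  case False
  then have "z powr r \<le> z powr r0" using assms by (intro powr_mono) auto
  then show ?thesis by linarith
qed

lemma powr_eta_split:
  fixes z r r0 s eta :: real
  assumes "0 \<le> z" "0 \<le> s" "s \<le> r" "r \<le> r0" "0 < eta" "eta \<le> 1"
  shows "z powr r \<le> eta powr s + eta powr (s - r0) * z powr r0"
proof (cases "z \<le> eta")
  case True
  have "z powr r \<le> eta powr r" using assms True by (intro powr_mono2) auto
  also have "\<dots> \<le> eta powr s" using assms by (intro powr_mono') auto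
  finally show ?thesis by (smt (verit) mult_nonneg_nonneg powr_ge_zero)
next
  case False
  then have zp: "z > 0" using assms by auto
  have "z powr r = z powr (r - r0) * z powr r0" by (simp add: powr_add[symmetric])
  also have "z powr (r - r0) \<le> eta powr (r - r0)"
    using assms False by (intro powr_mono2') auto
  also have "eta powr (r - r0) \<le> eta powr (s - r0)" using assms by (intro powr_mono') auto
  finally have "z powr r \<le> eta powr (s - r0) * z powr r0"
    by (simp add: mult_right_mono)
  then show ?thesis by (smt (verit) powr_ge_zero)
qed



definition Phi :: "real \<Rightarrow> real \<Rightarrow> real \<Rightarrow> (real \<Rightarrow> real) \<Rightarrow> real \<Rightarrow> real" where
  "Phi a b r g t = integral\<^sup>L (lebesgue_on {a..b}) (\<lambda>x. \<bar>g x - t\<bar> powr r)"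

lemma in_Lr_D:
  assumes "in_Lr a b r0 g"
  shows "g \<in> borel_measurable (lebesgue_on {a..b})"
    "integrable (lebesgue_on {a..b}) (\<lambda>x. \<bar>g x\<bar> powr r0)"
  using assms unfolding in_Lr_def set_borel_measurable_def set_integrable_def
  by (simp_all add: borel_measurable_restrict_space_iff integrable_restrict_space)

lemma Lr_norm_Phi: "Lr_norm a b r (\<lambda>x. g x - t) = Phi a b r g t powr (1 / r)"
  unfolding Lr_norm_def Phi_def set_lebesgue_integral_def
  by (simp add: integral_restrict_space)

lemma Lr_norm_eq: "Lr_norm a b r g = (integral\<^sup>L (lebesgue_on {a..b}) (\<lambda>x. \<bar>g x\<bar> powr r)) powr (1 / r)"
  unfolding Lr_norm_def set_lebesgue_integral_def
  by (simp add: integral_restrict_space)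

lemma dom_bound:
  fixes y t T r r0 :: real
  assumes "\<bar>t\<bar> \<le> T" "0 \<le> r" "r \<le> r0"
  shows "\<bar>y - t\<bar> powr r \<le> 1 + 2 powr r0 * (\<bar>y\<bar> powr r0 + T powr r0)"
proof -
  have "\<bar>y - t\<bar> powr r \<le> 1 + \<bar>y - t\<bar> powr r0" using assms by (intro powr_le_1_plus) auto
  also have "\<bar>y - t\<bar> powr r0 \<le> (\<bar>y\<bar> + T) powr r0" using assms by (intro powr_mono2) auto
  also have "\<dots> \<le> (1 + 1) powr r0 * \<bar>y\<bar> powr r0 + (1 + 1 / 1) powr r0 * T powr r0"
    using assms by (intro powr_split) auto
  finally show ?thesis by (simp add: algebra_simps)
qed

lemma meas_pow[measurable]:
  fixes g :: "'a \<Rightarrow> real"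
  assumes "g \<in> borel_measurable M"
  shows "(\<lambda>x. \<bar>g x - t\<bar> powr r) \<in> borel_measurable M"
  by (intro measurable_abs_powr borel_measurable_diff assms) auto

lemma integrable_shift:
  fixes g :: "real \<Rightarrow> real"
  assumes g: "g \<in> borel_measurable (lebesgue_on {a..b})"
    and gi: "integrable (lebesgue_on {a..b}) (\<lambda>x. \<bar>g x\<bar> powr r0)"
    and r: "0 \<le> r" "r \<le> r0"
  shows "integrable (lebesgue_on {a..b}) (\<lambda>x. \<bar>g x - t\<bar> powr r)"
proof (rule Bochner_Integration.integrable_bound[where f="\<lambda>x. 1 + 2 powr r0 * (\<bar>g x\<bar> powr r0 + \<bar>t\<bar> powr r0)"])
  show "integrable (lebesgue_on {a..b}) (\<lambda>x. 1 + 2 powr r0 * (\<bar>g x\<bar> powr r0 + \<bar>t\<bar> powr r0))"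
    using gi by (intro Bochner_Integration.integrable_add Bochner_Integration.integrable_mult_right) auto
  show "(\<lambda>x. \<bar>g x - t\<bar> powr r) \<in> borel_measurable (lebesgue_on {a..b})" using g by measurable
  show "AE x in lebesgue_on {a..b}. norm (\<bar>g x - t\<bar> powr r) \<le> norm (1 + 2 powr r0 * (\<bar>g x\<bar> powr r0 + \<bar>t\<bar> powr r0))"
    using dom_bound[of t "\<bar>t\<bar>" r r0] r by (intro AE_I2) (auto simp: abs_of_nonneg add_nonneg_nonneg)
qed

lemma Phi_nonneg: "Phi a b r g t \<ge> 0"
  unfolding Phi_def by (intro integral_nonneg_AE) auto

lemma Phi_cont_seq:
  fixes g :: "real \<Rightarrow> real"
  assumes g: "g \<in> borel_measurable (lebesgue_on {a..b})"
    and gi: "integrable (lebesgue_on {a..b}) (\<lambda>x. \<bar>g x\<bar> powr r0)"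
    and rk: "\<And>k. 0 \<le> rk k \<and> rk k \<le> r0" "rk \<longlonglongrightarrow> rs" "0 < rs"
    and tk: "tk \<longlonglongrightarrow> al" "\<And>k. \<bar>tk k\<bar> \<le> T"
  shows "(\<lambda>k. Phi a b (rk k) g (tk k)) \<longlonglongrightarrow> Phi a b rs g al"
  unfolding Phi_def
proof (rule integral_dominated_convergence[where w = "\<lambda>x. 1 + 2 powr r0 * (\<bar>g x\<bar> powr r0 + T powr r0)"])
  show "integrable (lebesgue_on {a..b}) (\<lambda>x. 1 + 2 powr r0 * (\<bar>g x\<bar> powr r0 + T powr r0))"
    using gi by (intro Bochner_Integration.integrable_add Bochner_Integration.integrable_mult_right) auto
  show "(\<lambda>x. \<bar>g x - al\<bar> powr rs) \<in> borel_measurable (lebesgue_on {a..b})" using g by measurable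
  show "\<And>k. (\<lambda>x. \<bar>g x - tk k\<bar> powr rk k) \<in> borel_measurable (lebesgue_on {a..b})" using g by measurable
  show "AE x in lebesgue_on {a..b}. (\<lambda>k. \<bar>g x - tk k\<bar> powr rk k) \<longlonglongrightarrow> \<bar>g x - al\<bar> powr rs"
  proof (intro AE_I2 tendsto_powr')
    fix x show "(\<lambda>k. \<bar>g x - tk k\<bar>) \<longlonglongrightarrow> \<bar>g x - al\<bar>" using tk by (intro tendsto_intros)
  qed (use rk in auto)
  show "\<And>k. AE x in lebesgue_on {a..b}. norm (\<bar>g x - tk k\<bar> powr rk k) \<le> 1 + 2 powr r0 * (\<bar>g x\<bar> powr r0 + T powr r0)"
    using dom_bound rk tk by (intro AE_I2) auto
qed

lemma measure_ab: "a \<le> b \<Longrightarrow> measure (lebesgue_on {a..b::real}) {a..b} = b - a"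
  by (simp add: measure_restrict_space)

lemma int_const_ab: "a \<le> b \<Longrightarrow> integral\<^sup>L (lebesgue_on {a..b::real}) (\<lambda>x. c) = (b - a) * c"
  by (simp add: measure_restrict_space)

lemma coercive:
  fixes g :: "real \<Rightarrow> real"
  assumes g: "g \<in> borel_measurable (lebesgue_on {a..b})"
    and gi: "integrable (lebesgue_on {a..b}) (\<lambda>x. \<bar>g x\<bar> powr r0)"
    and r: "0 \<le> r" "r \<le> r0" and ab: "a \<le> b"
  shows "(b - a) * \<bar>t\<bar> powr r \<le> 2 powr r * (Phi a b r g t + Phi a b r g 0)"
proof -
  have "integral\<^sup>L (lebesgue_on {a..b}) (\<lambda>x. \<bar>t\<bar> powr r) \<le>
        integral\<^sup>L (lebesgue_on {a..b}) (\<lambda>x. 2 powr r * \<bar>g x - t\<bar> powr r + 2 powr r * \<bar>g x - 0\<bar> powr r)"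
  proof (rule integral_mono)
    show "integrable (lebesgue_on {a..b}) (\<lambda>x. 2 powr r * \<bar>g x - t\<bar> powr r + 2 powr r * \<bar>g x - 0\<bar> powr r)"
      using integrable_shift[OF g gi r, of t] integrable_shift[OF g gi r, of 0, simplified] by (intro Bochner_Integration.integrable_add Bochner_Integration.integrable_mult_right) auto
    fix x
    have "\<bar>t\<bar> powr r \<le> (\<bar>g x - t\<bar> + \<bar>g x\<bar>) powr r" using r by (intro powr_mono2) auto
    also have "\<dots> \<le> (1 + 1) powr r * \<bar>g x - t\<bar> powr r + (1 + 1 / 1) powr r * \<bar>g x\<bar> powr r"
      using r by (intro powr_split) auto
    finally show "\<bar>t\<bar> powr r \<le> 2 powr r * \<bar>g x - t\<bar> powr r + 2 powr r * \<bar>g x - 0\<bar> powr r" by simp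
  qed auto
  also have "\<dots> = 2 powr r * (Phi a b r g t + Phi a b r g 0)"
    unfolding Phi_def using integrable_shift[OF g gi r, of t] integrable_shift[OF g gi r, of 0]
    by (simp add: algebra_simps)
  finally show ?thesis using ab by (simp add: measure_ab)
qed

lemma min_exists:
  fixes g :: "real \<Rightarrow> real"
  assumes g: "g \<in> borel_measurable (lebesgue_on {a..b})"
    and gi: "integrable (lebesgue_on {a..b}) (\<lambda>x. \<bar>g x\<bar> powr r0)"
    and r: "1 < r" "r \<le> r0" and ab: "a < b"
  shows "\<exists>t. \<forall>u. Phi a b r g t \<le> Phi a b r g u"
proof -
  define P0 where "P0 = Phi a b r g 0"
  define R where "R = 2 * 2 powr r * P0 / (b - a) + 1"
  have P0: "P0 \<ge> 0" unfolding P0_def by (rule Phi_nonneg)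
  have R1: "R \<ge> 1" unfolding R_def using P0 ab by auto
  have cont: "continuous_on {-R..R} (Phi a b r g)"
  proof (rule continuous_on_sequentiallyI)
    fix u al assume u: "\<forall>n. u n \<in> {-R..R}" "al \<in> {-R..R}" "u \<longlonglongrightarrow> al"
    have uR: "\<bar>u k\<bar> \<le> R" for k using u(1) by (auto simp: abs_le_iff minus_le_iff)
    show "(\<lambda>n. Phi a b r g (u n)) \<longlonglongrightarrow> Phi a b r g al"
      using Phi_cont_seq[OF g gi, of "\<lambda>_. r" r u al R] uR u r by auto
  qed
  obtain x where x: "x \<in> {-R..R}" "\<And>y. y \<in> {-R..R} \<Longrightarrow> Phi a b r g x \<le> Phi a b r g y"
    using continuous_attains_inf[OF compact_Icc _ cont] R1 by fastforce
  have "Phi a b r g x \<le> Phi a b r g u" for u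
  proof (cases "u \<in> {-R..R}")
    case True then show ?thesis using x by auto
  next
    case False
    then have uR: "\<bar>u\<bar> > R" by auto
    have "\<bar>u\<bar> powr 1 \<le> \<bar>u\<bar> powr r" using uR R1 r by (intro powr_mono) auto
    then have "\<bar>u\<bar> \<le> \<bar>u\<bar> powr r" using uR R1 by simp
    then have "(b - a) * \<bar>u\<bar> \<le> 2 powr r * (Phi a b r g u + P0)"
      using coercive[OF g gi, of r u] r ab unfolding P0_def
      by (smt (verit) mult_left_mono)
    moreover have "(b - a) * \<bar>u\<bar> > 2 * 2 powr r * P0"
    proof -
      have "\<bar>u\<bar> > 2 * 2 powr r * P0 / (b - a)" using uR unfolding R_def by linarith
      then show ?thesis using ab by (simp add: field_simps)
    qed
    ultimately have "2 * 2 powr r * P0 < 2 powr r * (Phi a b r g u + P0)" by linarith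
    then have "2 powr r * P0 < 2 powr r * Phi a b r g u" by (simp add: algebra_simps)
    then have "P0 < Phi a b r g u" by simp
    moreover have "Phi a b r g x \<le> P0" unfolding P0_def using x R1 by auto
    ultimately show ?thesis by linarith
  qed
  then show ?thesis by blast
qed

lemma min_unique:
  fixes g :: "real \<Rightarrow> real"
  assumes g: "g \<in> borel_measurable (lebesgue_on {a..b})"
    and gi: "integrable (lebesgue_on {a..b}) (\<lambda>x. \<bar>g x\<bar> powr r0)"
    and r: "1 < r" "r \<le> r0" and ab: "a < b"
    and t1: "\<forall>u. Phi a b r g t1 \<le> Phi a b r g u"
    and t2: "\<forall>u. Phi a b r g t2 \<le> Phi a b r g u"
  shows "t1 = t2"
proof (rule ccontr)
  assume ne: "t1 \<noteq> t2"
  define m where "m = (t1 + t2) / 2"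
  have r': "0 \<le> r" "r \<le> r0" using r by auto
  have "integral\<^sup>L (lebesgue_on {a..b}) (\<lambda>x. \<bar>g x - m\<bar> powr r) <
        integral\<^sup>L (lebesgue_on {a..b}) (\<lambda>x. (\<bar>g x - t1\<bar> powr r + \<bar>g x - t2\<bar> powr r) / 2)"
  proof (rule finite_measure.integral_less_AE_space[OF finite_measure_lebesgue_on])
    show "{a..b} \<in> lmeasurable" by simp
    show "integrable (lebesgue_on {a..b}) (\<lambda>x. \<bar>g x - m\<bar> powr r)"
      by (rule integrable_shift[OF g gi r'])
    show "integrable (lebesgue_on {a..b}) (\<lambda>x. (\<bar>g x - t1\<bar> powr r + \<bar>g x - t2\<bar> powr r) / 2)"
      using integrable_shift[OF g gi r', of t1] integrable_shift[OF g gi r', of t2] by auto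
    show "emeasure (lebesgue_on {a..b}) (space (lebesgue_on {a..b})) \<noteq> 0"
      using ab by (simp add: emeasure_restrict_space)
    show "AE x in lebesgue_on {a..b}. \<bar>g x - m\<bar> powr r < (\<bar>g x - t1\<bar> powr r + \<bar>g x - t2\<bar> powr r) / 2"
    proof (rule AE_I2)
      fix x
      have e: "((g x - t1) + (g x - t2)) / 2 = g x - m" unfolding m_def by (simp add: field_simps)
      have n: "g x - t1 \<noteq> g x - t2" using ne by auto
      show "\<bar>g x - m\<bar> powr r < (\<bar>g x - t1\<bar> powr r + \<bar>g x - t2\<bar> powr r) / 2"
        using powr_strict_mid[OF n r(1), unfolded e] .
    qed
  qed
  also have "\<dots> = (Phi a b r g t1 + Phi a b r g t2) / 2"
    unfolding Phi_def using integrable_shift[OF g gi r', of t1] integrable_shift[OF g gi r', of t2]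
    by simp
  finally have X: "Phi a b r g m < (Phi a b r g t1 + Phi a b r g t2) / 2" unfolding Phi_def .
  have Y: "Phi a b r g t1 \<le> Phi a b r g m" "Phi a b r g t2 \<le> Phi a b r g m" using t1 t2 by auto
  have Z: "Phi a b r g t1 + Phi a b r g t2 \<le> 2 * Phi a b r g m" using Y by linarith
  have W: "2 * Phi a b r g m < Phi a b r g t1 + Phi a b r g t2" using X by (simp add: field_simps)
  show False using Z W by linarith
qed

lemma powr_le_iff_pos: "0 \<le> x \<Longrightarrow> 0 \<le> y \<Longrightarrow> 0 < p \<Longrightarrow> x powr p \<le> y powr p \<longleftrightarrow> x \<le> (y::real)"
  by (meson not_le powr_less_mono2 powr_mono2 less_imp_le)

lemma tau_char:
  fixes g :: "real \<Rightarrow> real"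
  assumes g: "g \<in> borel_measurable (lebesgue_on {a..b})"
    and gi: "integrable (lebesgue_on {a..b}) (\<lambda>x. \<bar>g x\<bar> powr r0)"
    and r: "1 < r" "r \<le> r0" and ab: "a < b"
  shows "\<forall>u. Phi a b r g (tau a b r g) \<le> Phi a b r g u"
    and "(\<forall>u. Phi a b r g t \<le> Phi a b r g u) \<Longrightarrow> t = tau a b r g"
proof -
  have eq: "(\<forall>u. Lr_norm a b r (\<lambda>x. g x - t) \<le> Lr_norm a b r (\<lambda>x. g x - u)) \<longleftrightarrow>
        (\<forall>u. Phi a b r g t \<le> Phi a b r g u)" for t
    unfolding Lr_norm_Phi using r by (simp add: powr_le_iff_pos Phi_nonneg)
  have ex1: "\<exists>!t. \<forall>u. Phi a b r g t \<le> Phi a b r g u"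
    using min_exists[OF g gi r ab] min_unique[OF g gi r ab] by blast
  have td: "tau a b r g = (THE t. \<forall>u. Phi a b r g t \<le> Phi a b r g u)"
    unfolding tau_def eq ..
  show "\<forall>u. Phi a b r g (tau a b r g) \<le> Phi a b r g u"
    unfolding td by (rule theI'[OF ex1])
  show "(\<forall>u. Phi a b r g t \<le> Phi a b r g u) \<Longrightarrow> t = tau a b r g"
    unfolding td using ex1 by (simp add: the1_equality)
qed

lemma int_diff_pow:
  fixes g h :: "real \<Rightarrow> real"
  assumes g: "g \<in> borel_measurable (lebesgue_on {a..b})"
    and gi: "integrable (lebesgue_on {a..b}) (\<lambda>x. \<bar>g x\<bar> powr r0)"
    and h: "h \<in> borel_measurable (lebesgue_on {a..b})"
    and hi: "integrable (lebesgue_on {a..b}) (\<lambda>x. \<bar>h x\<bar> powr r0)"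
    and r0: "0 \<le> r0"
  shows "integrable (lebesgue_on {a..b}) (\<lambda>x. \<bar>h x - g x\<bar> powr r0)"
proof (rule Bochner_Integration.integrable_bound[where f="\<lambda>x. 2 powr r0 * \<bar>h x\<bar> powr r0 + 2 powr r0 * \<bar>g x\<bar> powr r0"])
  show "integrable (lebesgue_on {a..b}) (\<lambda>x. 2 powr r0 * \<bar>h x\<bar> powr r0 + 2 powr r0 * \<bar>g x\<bar> powr r0)"
    using gi hi by (intro Bochner_Integration.integrable_add Bochner_Integration.integrable_mult_right) auto
  show "(\<lambda>x. \<bar>h x - g x\<bar> powr r0) \<in> borel_measurable (lebesgue_on {a..b})"
    by (intro measurable_abs_powr borel_measurable_diff g h)
  show "AE x in lebesgue_on {a..b}. norm (\<bar>h x - g x\<bar> powr r0) \<le> norm (2 powr r0 * \<bar>h x\<bar> powr r0 + 2 powr r0 * \<bar>g x\<bar> powr r0)"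
  proof (rule AE_I2)
    fix x
    have "\<bar>h x - g x\<bar> powr r0 \<le> (\<bar>h x\<bar> + \<bar>g x\<bar>) powr r0" using r0 by (intro powr_mono2) auto
    also have "\<dots> \<le> (1 + 1) powr r0 * \<bar>h x\<bar> powr r0 + (1 + 1 / 1) powr r0 * \<bar>g x\<bar> powr r0"
      using r0 by (intro powr_split) auto
    finally show "norm (\<bar>h x - g x\<bar> powr r0) \<le> norm (2 powr r0 * \<bar>h x\<bar> powr r0 + 2 powr r0 * \<bar>g x\<bar> powr r0)"
      by simp
  qed
qed

lemma Phi0_le:
  fixes g :: "real \<Rightarrow> real"
  assumes g: "g \<in> borel_measurable (lebesgue_on {a..b})"
    and gi: "integrable (lebesgue_on {a..b}) (\<lambda>x. \<bar>g x\<bar> powr r0)"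
    and r: "0 \<le> r" "r \<le> r0" and ab: "a \<le> b"
  shows "Phi a b r g 0 \<le> (b - a) + integral\<^sup>L (lebesgue_on {a..b}) (\<lambda>x. \<bar>g x\<bar> powr r0)"
proof -
  have "Phi a b r g 0 \<le> integral\<^sup>L (lebesgue_on {a..b}) (\<lambda>x. 1 + \<bar>g x\<bar> powr r0)"
    unfolding Phi_def
  proof (rule integral_mono)
    show "integrable (lebesgue_on {a..b}) (\<lambda>x. \<bar>g x - 0\<bar> powr r)" using integrable_shift[OF g gi r] .
    show "integrable (lebesgue_on {a..b}) (\<lambda>x. 1 + \<bar>g x\<bar> powr r0)" using gi by auto
    show "\<bar>g x - 0\<bar> powr r \<le> 1 + \<bar>g x\<bar> powr r0" for x using powr_le_1_plus[of "\<bar>g x\<bar>" r r0] r by auto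
  qed
  also have "\<dots> = (b - a) + integral\<^sup>L (lebesgue_on {a..b}) (\<lambda>x. \<bar>g x\<bar> powr r0)"
    using gi ab by (simp add: measure_ab)
  finally show ?thesis .
qed

lemma tau_bound:
  fixes g :: "real \<Rightarrow> real"
  assumes g: "g \<in> borel_measurable (lebesgue_on {a..b})"
    and gi: "integrable (lebesgue_on {a..b}) (\<lambda>x. \<bar>g x\<bar> powr r0)"
    and r: "1 \<le> r" "r \<le> r0" and ab: "a < b"
    and I: "integral\<^sup>L (lebesgue_on {a..b}) (\<lambda>x. \<bar>g x\<bar> powr r0) \<le> I"
    and t: "\<forall>u. Phi a b r g t \<le> Phi a b r g u"
  shows "\<bar>t\<bar> \<le> max 1 (2 * 2 powr r0 * ((b - a) + I) / (b - a))"
proof (cases "\<bar>t\<bar> \<le> 1")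
  case True then show ?thesis by auto
next
  case False
  have r': "0 \<le> r" "r \<le> r0" using r by auto
  have "\<bar>t\<bar> powr 1 \<le> \<bar>t\<bar> powr r" using False r by (intro powr_mono) auto
  then have tt: "\<bar>t\<bar> \<le> \<bar>t\<bar> powr r" using False by simp
  have P0: "Phi a b r g 0 \<le> (b - a) + I" using Phi0_le[OF g gi r'] ab I by linarith
  have Pt: "Phi a b r g t \<le> Phi a b r g 0" using t by auto
  have p2: "2 powr r \<le> 2 powr r0" using r by (intro powr_mono) auto
  have "(b - a) * \<bar>t\<bar> \<le> (b - a) * \<bar>t\<bar> powr r" using tt ab by (intro mult_left_mono) auto
  also have "\<dots> \<le> 2 powr r * (Phi a b r g t + Phi a b r g 0)"
    using coercive[OF g gi r'] ab by auto
  also have "\<dots> \<le> 2 powr r0 * (2 * ((b - a) + I))"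
    using Pt P0 p2 Phi_nonneg[of a b r g t] Phi_nonneg[of a b r g 0]
    by (intro mult_mono) auto
  finally have "(b - a) * \<bar>t\<bar> \<le> 2 * 2 powr r0 * ((b - a) + I)" by (simp add: algebra_simps)
  then have "\<bar>t\<bar> \<le> 2 * 2 powr r0 * ((b - a) + I) / (b - a)"
    using ab by (simp add: field_simps)
  then show ?thesis by linarith
qed

lemma Phi_upper:
  fixes g :: "real \<Rightarrow> real"
  assumes g: "g \<in> borel_measurable (lebesgue_on {a..b})"
    and gi: "integrable (lebesgue_on {a..b}) (\<lambda>x. \<bar>g x\<bar> powr r0)"
    and r: "0 \<le> r" "r \<le> r0" and ab: "a \<le> b" and tT: "\<bar>t\<bar> \<le> T"
    and I: "integral\<^sup>L (lebesgue_on {a..b}) (\<lambda>x. \<bar>g x\<bar> powr r0) \<le> I"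
  shows "Phi a b r g t \<le> (b - a) * (1 + 2 powr r0 * T powr r0) + 2 powr r0 * I"
proof -
  have "Phi a b r g t \<le> integral\<^sup>L (lebesgue_on {a..b}) (\<lambda>x. 1 + 2 powr r0 * (\<bar>g x\<bar> powr r0 + T powr r0))"
    unfolding Phi_def
  proof (rule integral_mono)
    show "integrable (lebesgue_on {a..b}) (\<lambda>x. \<bar>g x - t\<bar> powr r)" using integrable_shift[OF g gi r] .
    show "integrable (lebesgue_on {a..b}) (\<lambda>x. 1 + 2 powr r0 * (\<bar>g x\<bar> powr r0 + T powr r0))"
      using gi by (intro Bochner_Integration.integrable_add Bochner_Integration.integrable_mult_right) auto
    show "\<bar>g x - t\<bar> powr r \<le> 1 + 2 powr r0 * (\<bar>g x\<bar> powr r0 + T powr r0)" for x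
      using dom_bound[OF tT r] .
  qed
  also have "\<dots> = (b - a) * (1 + 2 powr r0 * T powr r0) + 2 powr r0 * integral\<^sup>L (lebesgue_on {a..b}) (\<lambda>x. \<bar>g x\<bar> powr r0)"
    using gi ab by (simp add: measure_ab algebra_simps)
  also have "\<dots> \<le> (b - a) * (1 + 2 powr r0 * T powr r0) + 2 powr r0 * I"
    using I by auto
  finally show ?thesis .
qed

lemma Phi_compare:
  fixes g h :: "real \<Rightarrow> real"
  assumes g: "g \<in> borel_measurable (lebesgue_on {a..b})"
    and gi: "integrable (lebesgue_on {a..b}) (\<lambda>x. \<bar>g x\<bar> powr r0)"
    and h: "h \<in> borel_measurable (lebesgue_on {a..b})"
    and hi: "integrable (lebesgue_on {a..b}) (\<lambda>x. \<bar>h x\<bar> powr r0)"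
    and d: "0 < d" and e: "0 < e" "e \<le> 1" and r: "0 \<le> s" "s \<le> r" "r \<le> r0" and ab: "a \<le> b"
  shows "Phi a b r h t \<le> (1 + d) powr r0 * Phi a b r g t + (1 + 1 / d) powr r0 *
           ((b - a) * e powr s + e powr (s - r0) * integral\<^sup>L (lebesgue_on {a..b}) (\<lambda>x. \<bar>h x - g x\<bar> powr r0))"
proof -
  have r': "0 \<le> r" "r \<le> r0" using r by auto
  have hg: "integrable (lebesgue_on {a..b}) (\<lambda>x. \<bar>h x - g x\<bar> powr r0)"
    using int_diff_pow[OF g gi h hi] r by auto
  have "Phi a b r h t \<le> integral\<^sup>L (lebesgue_on {a..b})
        (\<lambda>x. (1 + d) powr r0 * \<bar>g x - t\<bar> powr r + (1 + 1 / d) powr r0 * (e powr s + e powr (s - r0) * \<bar>h x - g x\<bar> powr r0))"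
    unfolding Phi_def
  proof (rule integral_mono)
    show "integrable (lebesgue_on {a..b}) (\<lambda>x. \<bar>h x - t\<bar> powr r)" using integrable_shift[OF h hi r'] .
    show "integrable (lebesgue_on {a..b}) (\<lambda>x. (1 + d) powr r0 * \<bar>g x - t\<bar> powr r + (1 + 1 / d) powr r0 * (e powr s + e powr (s - r0) * \<bar>h x - g x\<bar> powr r0))"
      using integrable_shift[OF g gi r'] hg
      by (intro Bochner_Integration.integrable_add Bochner_Integration.integrable_mult_right) auto
    fix x
    have "\<bar>h x - t\<bar> powr r \<le> (\<bar>g x - t\<bar> + \<bar>h x - g x\<bar>) powr r" using r' by (intro powr_mono2) auto
    also have "\<dots> \<le> (1 + d) powr r * \<bar>g x - t\<bar> powr r + (1 + 1 / d) powr r * \<bar>h x - g x\<bar> powr r"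
      using r' d by (intro powr_split) auto
    also have "\<dots> \<le> (1 + d) powr r0 * \<bar>g x - t\<bar> powr r + (1 + 1 / d) powr r0 * (e powr s + e powr (s - r0) * \<bar>h x - g x\<bar> powr r0)"
    proof (intro add_mono mult_mono)
      show "(1 + d) powr r \<le> (1 + d) powr r0" using d r' by (intro powr_mono) auto
      show "(1 + 1 / d) powr r \<le> (1 + 1 / d) powr r0" using d r' by (intro powr_mono) auto
      show "\<bar>h x - g x\<bar> powr r \<le> e powr s + e powr (s - r0) * \<bar>h x - g x\<bar> powr r0"
        using powr_eta_split[of "\<bar>h x - g x\<bar>" s r r0 e] r e by auto
    qed auto
    finally show "\<bar>h x - t\<bar> powr r \<le> (1 + d) powr r0 * \<bar>g x - t\<bar> powr r + (1 + 1 / d) powr r0 * (e powr s + e powr (s - r0) * \<bar>h x - g x\<bar> powr r0)" .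
  qed
  also have "\<dots> = (1 + d) powr r0 * Phi a b r g t + (1 + 1 / d) powr r0 *
           ((b - a) * e powr s + e powr (s - r0) * integral\<^sup>L (lebesgue_on {a..b}) (\<lambda>x. \<bar>h x - g x\<bar> powr r0))"
    unfolding Phi_def using integrable_shift[OF g gi r'] hg ab
    by (simp add: measure_ab algebra_simps)
  finally show ?thesis .
qed



lemma approx_seq:
  fixes G :: "nat \<Rightarrow> real \<Rightarrow> real \<Rightarrow> real" and H :: "real \<Rightarrow> real \<Rightarrow> real"
  assumes U: "\<forall>\<epsilon>>0. \<exists>N. \<forall>n\<ge>N. \<forall>r\<in>S. \<forall>t. \<bar>t\<bar> \<le> T \<longrightarrow> \<bar>G n r t - H r t\<bar> < \<epsilon>"
    and nk: "\<And>k. k \<le> nk k" and rk: "\<And>k. rk k \<in> S" and tk: "\<And>k. \<bar>tk k\<bar> \<le> T"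
  shows "(\<lambda>k. G (nk k) (rk k) (tk k) - H (rk k) (tk k)) \<longlonglongrightarrow> 0"
proof (rule LIMSEQ_I)
  fix \<epsilon> :: real assume "0 < \<epsilon>"
  then obtain N where N: "\<forall>n\<ge>N. \<forall>r\<in>S. \<forall>t. \<bar>t\<bar> \<le> T \<longrightarrow> \<bar>G n r t - H r t\<bar> < \<epsilon>" using U by blast
  show "\<exists>no. \<forall>k\<ge>no. norm (G (nk k) (rk k) (tk k) - H (rk k) (tk k) - 0) < \<epsilon>"
  proof (intro exI allI impI)
    fix k assume "N \<le> k"
    then have "N \<le> nk k" using nk le_trans by blast
    then show "norm (G (nk k) (rk k) (tk k) - H (rk k) (tk k) - 0) < \<epsilon>" using N rk tk by simp
  qed
qed

theorem lemma4:
  fixes a b r0 :: real and f :: "real \<Rightarrow> real" and F :: "nat \<Rightarrow> real \<Rightarrow> real"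
  assumes "a < b" and "r0 > 1"
    and "in_Lr a b r0 f" and "\<And>n. in_Lr a b r0 (F n)"
    and "(\<lambda>n. Lr_norm a b r0 (\<lambda>x. F n x - f x)) \<longlonglongrightarrow> 0"
  shows "\<forall>s. 1 < s \<and> s < r0 \<longrightarrow>
           uniform_limit {s..r0} (\<lambda>n r. tau a b r (F n)) (\<lambda>r. tau a b r f) sequentially"
proof (intro allI impI)
  fix s assume s: "1 < s \<and> s < r0"
  have ab: "a < b" and ab': "a \<le> b" using assms(1) by auto
  have r0: "r0 > 1" using assms(2) .
  note fm = in_Lr_D[OF assms(3)]
  have Fm: "F n \<in> borel_measurable (lebesgue_on {a..b})" "integrable (lebesgue_on {a..b}) (\<lambda>x. \<bar>F n x\<bar> powr r0)" for n
    using in_Lr_D[OF assms(4)] by auto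
  define D where "D n = integral\<^sup>L (lebesgue_on {a..b}) (\<lambda>x. \<bar>F n x - f x\<bar> powr r0)" for n
  have Dnn: "D n \<ge> 0" for n unfolding D_def by (intro integral_nonneg_AE) auto
  have D0: "D \<longlonglongrightarrow> 0"
  proof -
    have "(\<lambda>n. Lr_norm a b r0 (\<lambda>x. F n x - f x)) = (\<lambda>n. D n powr (1 / r0))"
      unfolding Lr_norm_eq D_def ..
    with assms(5) have L: "(\<lambda>n. D n powr (1 / r0)) \<longlonglongrightarrow> 0" by simp
    have "(\<lambda>n. (D n powr (1 / r0)) powr r0) \<longlonglongrightarrow> 0 powr r0"
      by (rule tendsto_powr'[OF L tendsto_const]) (use r0 in auto)
    moreover have "(D n powr (1 / r0)) powr r0 = D n" for n using Dnn[of n] r0 by (simp add: powr_powr)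
    ultimately show ?thesis by simp
  qed
  obtain K where K: "K > 0" "\<And>n. D n \<le> K"
    using BseqE[OF convergent_imp_Bseq[OF convergentI[OF D0]]] by (metis abs_le_D1 real_norm_def)
  define If where "If = integral\<^sup>L (lebesgue_on {a..b}) (\<lambda>x. \<bar>f x\<bar> powr r0)"
  have Ifnn: "If \<ge> 0" unfolding If_def by (intro integral_nonneg_AE) auto
  define IB where "IB = 2 powr r0 * (K + If)"
  have p2: "2 powr r0 \<ge> 1" using r0 by (intro ge_one_powr_ge_zero) auto
  have If_le: "integral\<^sup>L (lebesgue_on {a..b}) (\<lambda>x. \<bar>f x\<bar> powr r0) \<le> IB"
  proof -
    have "If \<le> 1 * (K + If)" using K by simp
    also have "\<dots> \<le> 2 powr r0 * (K + If)" using p2 K Ifnn by (intro mult_right_mono) auto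
    finally show ?thesis unfolding IB_def If_def .
  qed
  have IF_le: "integral\<^sup>L (lebesgue_on {a..b}) (\<lambda>x. \<bar>F n x\<bar> powr r0) \<le> IB" for n
  proof -
    have hg: "integrable (lebesgue_on {a..b}) (\<lambda>x. \<bar>F n x - f x\<bar> powr r0)"
      using int_diff_pow[OF fm Fm] r0 by auto
    have "integral\<^sup>L (lebesgue_on {a..b}) (\<lambda>x. \<bar>F n x\<bar> powr r0) \<le>
          integral\<^sup>L (lebesgue_on {a..b}) (\<lambda>x. 2 powr r0 * \<bar>F n x - f x\<bar> powr r0 + 2 powr r0 * \<bar>f x\<bar> powr r0)"
    proof (rule integral_mono)
      show "integrable (lebesgue_on {a..b}) (\<lambda>x. \<bar>F n x\<bar> powr r0)" using Fm by auto
      show "integrable (lebesgue_on {a..b}) (\<lambda>x. 2 powr r0 * \<bar>F n x - f x\<bar> powr r0 + 2 powr r0 * \<bar>f x\<bar> powr r0)"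
        using hg fm by (intro Bochner_Integration.integrable_add Bochner_Integration.integrable_mult_right) auto
      fix x
      have "\<bar>F n x\<bar> powr r0 \<le> (\<bar>F n x - f x\<bar> + \<bar>f x\<bar>) powr r0" using r0 by (intro powr_mono2) auto
      also have "\<dots> \<le> (1 + 1) powr r0 * \<bar>F n x - f x\<bar> powr r0 + (1 + 1 / 1) powr r0 * \<bar>f x\<bar> powr r0"
        using r0 by (intro powr_split) auto
      finally show "\<bar>F n x\<bar> powr r0 \<le> 2 powr r0 * \<bar>F n x - f x\<bar> powr r0 + 2 powr r0 * \<bar>f x\<bar> powr r0" by simp
    qed
    also have "\<dots> = 2 powr r0 * (D n + If)"
      unfolding D_def If_def using hg fm by (simp add: algebra_simps)
    also have "\<dots> \<le> IB" unfolding IB_def using K p2 by (intro mult_left_mono) auto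
    finally show ?thesis .
  qed
  define T where "T = max 1 (2 * 2 powr r0 * ((b - a) + IB) / (b - a))"
  have rS: "1 < r" "r \<le> r0" if "r \<in> {s..r0}" for r using that s by auto
  have minf: "\<forall>u. Phi a b r f (tau a b r f) \<le> Phi a b r f u" if "r \<in> {s..r0}" for r
    using tau_char(1)[OF fm rS[OF that] ab] .
  have minF: "\<forall>u. Phi a b r (F n) (tau a b r (F n)) \<le> Phi a b r (F n) u" if "r \<in> {s..r0}" for r n
    using tau_char(1)[OF Fm rS[OF that] ab] .
  have uniqf: "t = tau a b r f" if "r \<in> {s..r0}" "\<forall>u. Phi a b r f t \<le> Phi a b r f u" for r t
    using tau_char(2)[OF fm rS[OF that(1)] ab] that(2) by blast
  have Tf: "\<bar>tau a b r f\<bar> \<le> T" if "r \<in> {s..r0}" for r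
    unfolding T_def using tau_bound[OF fm _ _ ab If_le minf[OF that]] rS[OF that] by auto
  have TF: "\<bar>tau a b r (F n)\<bar> \<le> T" if "r \<in> {s..r0}" for r n
    unfolding T_def using tau_bound[OF Fm _ _ ab IF_le minF[OF that]] rS[OF that] by auto
  have UA: "\<forall>\<epsilon>>0. \<exists>N. \<forall>n\<ge>N. \<forall>r\<in>{s..r0}. \<forall>t. \<bar>t\<bar> \<le> T \<longrightarrow> \<bar>Phi a b r (F n) t - Phi a b r f t\<bar> < \<epsilon>"
  proof (intro allI impI)
    fix \<epsilon> :: real assume \<epsilon>: "\<epsilon> > 0"
    define e3 where "e3 = \<epsilon> / 3"
    have e3: "e3 > 0" "\<epsilon> = 3 * e3" unfolding e3_def using \<epsilon> by auto
    define B2 where "B2 = (b - a) * (1 + 2 powr r0 * T powr r0) + 2 powr r0 * IB"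
    have PB: "Phi a b r f t \<le> B2" if "r \<in> {s..r0}" "\<bar>t\<bar> \<le> T" for r t
      unfolding B2_def using Phi_upper[OF fm _ _ ab' that(2) If_le] rS[OF that(1)] by auto
    have PBn: "Phi a b r (F n) t \<le> B2" if "r \<in> {s..r0}" "\<bar>t\<bar> \<le> T" for r t n
      unfolding B2_def using Phi_upper[OF Fm _ _ ab' that(2) IF_le] rS[OF that(1)] by auto
    have "((\<lambda>d. ((1 + d) powr r0 - 1) * B2) \<longlongrightarrow> ((1 + 0) powr r0 - 1) * B2) (at_right 0)"
      by (intro tendsto_intros) auto
    then have "((\<lambda>d. ((1 + d) powr r0 - 1) * B2) \<longlongrightarrow> 0) (at_right 0)" by simp
    from order_tendstoD(2)[OF this e3(1)]
    obtain d0 where d0: "d0 > 0" "\<And>y. y > 0 \<Longrightarrow> y < d0 \<Longrightarrow> ((1 + y) powr r0 - 1) * B2 < e3"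
      by (auto simp: eventually_at_right_field)
    define d where "d = d0 / 2"
    have d: "d > 0" "((1 + d) powr r0 - 1) * B2 < e3" using d0 unfolding d_def by auto
    define C1 where "C1 = (1 + 1 / d) powr r0"
    have ev0: "eventually (\<lambda>e. 0 \<le> e) (at_right (0::real))"
      by (auto simp: eventually_at_right_field intro!: exI[of _ 1])
    have "((\<lambda>e. C1 * (b - a) * e powr s) \<longlongrightarrow> C1 * (b - a) * 0 powr s) (at_right 0)"
      using s ev0 by (intro tendsto_mult tendsto_const tendsto_powr' tendsto_ident_at) auto
    then have "((\<lambda>e. C1 * (b - a) * e powr s) \<longlongrightarrow> 0) (at_right 0)" using s by simp
    from order_tendstoD(2)[OF this e3(1)]
    obtain e0 where e0: "e0 > 0" "\<And>y. y > 0 \<Longrightarrow> y < e0 \<Longrightarrow> C1 * (b - a) * y powr s < e3"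
      by (auto simp: eventually_at_right_field)
    define e where "e = min (e0 / 2) 1"
    have e: "e > 0" "e \<le> 1" "C1 * (b - a) * e powr s < e3" using e0 unfolding e_def by auto
    have "(\<lambda>n. C1 * e powr (s - r0) * D n) \<longlonglongrightarrow> C1 * e powr (s - r0) * 0"
      by (intro tendsto_mult tendsto_const D0)
    then have "(\<lambda>n. C1 * e powr (s - r0) * D n) \<longlonglongrightarrow> 0" by simp
    from order_tendstoD(2)[OF this e3(1)]
    obtain N where N: "\<And>n. n \<ge> N \<Longrightarrow> C1 * e powr (s - r0) * D n < e3"
      by (auto simp: eventually_sequentially)
    have A1: "(1 + d) powr r0 \<ge> 1" using d r0 by (intro ge_one_powr_ge_zero) auto
    show "\<exists>N. \<forall>n\<ge>N. \<forall>r\<in>{s..r0}. \<forall>t. \<bar>t\<bar> \<le> T \<longrightarrow> \<bar>Phi a b r (F n) t - Phi a b r f t\<bar> < \<epsilon>"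
    proof (intro exI allI impI ballI)
      fix n r t assume n: "N \<le> n" and r: "r \<in> {s..r0}" and t: "\<bar>t\<bar> \<le> T"
      have sr: "0 \<le> s" "s \<le> r" "r \<le> r0" using r s by auto
      define P where "P = Phi a b r f t"
      define Q where "Q = Phi a b r (F n) t"
      define A where "A = (1 + d) powr r0"
      define E where "E = C1 * ((b - a) * e powr s + e powr (s - r0) * D n)"
      have E: "E < 2 * e3" unfolding E_def using e(3) N[OF n] by (simp add: algebra_simps)
      have c1: "Q \<le> A * P + E"
        unfolding Q_def P_def A_def E_def C1_def D_def
        using Phi_compare[OF fm(1) fm(2) Fm(1)[of n] Fm(2)[of n] d(1) e(1) e(2) sr ab', of t] .
      have Dsym: "integral\<^sup>L (lebesgue_on {a..b}) (\<lambda>x. \<bar>f x - F n x\<bar> powr r0) = D n"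
        unfolding D_def by (simp add: abs_minus_commute)
      have c2: "P \<le> A * Q + E"
        unfolding Q_def P_def A_def E_def C1_def Dsym[symmetric]
        using Phi_compare[OF Fm(1)[of n] Fm(2)[of n] fm(1) fm(2) d(1) e(1) e(2) sr ab', of t] .
      have P: "0 \<le> P" "P \<le> B2" unfolding P_def using PB[OF r t] Phi_nonneg by auto
      have Q: "0 \<le> Q" "Q \<le> B2" unfolding Q_def using PBn[OF r t] Phi_nonneg by auto
      have h1: "(A - 1) * P \<le> (A - 1) * B2" using A1 P unfolding A_def by (intro mult_left_mono) auto
      have h2: "(A - 1) * Q \<le> (A - 1) * B2" using A1 Q unfolding A_def by (intro mult_left_mono) auto
      have h3: "(A - 1) * B2 < e3" using d(2) unfolding A_def .
      have "Q - P \<le> (A - 1) * P + E" using c1 by (simp add: algebra_simps)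
      moreover have "P - Q \<le> (A - 1) * Q + E" using c2 by (simp add: algebra_simps)
      ultimately show "\<bar>Phi a b r (F n) t - Phi a b r f t\<bar> < \<epsilon>"
        unfolding P_def[symmetric] Q_def[symmetric] using h1 h2 h3 E e3(2) by linarith
    qed
  qed
  show "uniform_limit {s..r0} (\<lambda>n r. tau a b r (F n)) (\<lambda>r. tau a b r f) sequentially"
    unfolding uniform_limit_sequentially_iff
  proof (rule ccontr)
    assume "\<not> (\<forall>e>0. \<exists>N. \<forall>n\<ge>N. \<forall>x\<in>{s..r0}. dist (tau a b x (F n)) (tau a b x f) < e)"
    then obtain \<epsilon> where \<epsilon>: "\<epsilon> > 0" "\<forall>N. \<exists>n\<ge>N. \<exists>x\<in>{s..r0}. \<epsilon> \<le> \<bar>tau a b x (F n) - tau a b x f\<bar>"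
      by (auto simp: not_less dist_real_def)
    then have "\<forall>N. \<exists>n r. N \<le> n \<and> r \<in> {s..r0} \<and> \<epsilon> \<le> \<bar>tau a b r (F n) - tau a b r f\<bar>" by blast
    then obtain nn rr where nn: "\<And>N. N \<le> nn N" "\<And>N. rr N \<in> {s..r0}"
        "\<And>N. \<epsilon> \<le> \<bar>tau a b (rr N) (F (nn N)) - tau a b (rr N) f\<bar>"
      by metis
    define q where "q N = (rr N, tau a b (rr N) (F (nn N)), tau a b (rr N) f)" for N
    have qK: "\<forall>N. q N \<in> {s..r0} \<times> {-T..T} \<times> {-T..T}"
      using Tf TF nn(2) by (auto simp: q_def abs_le_iff minus_le_iff)
    have "seq_compact ({s..r0} \<times> {-T..T} \<times> {-T..T})"
      by (intro compact_imp_seq_compact compact_Times compact_Icc)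
    then obtain l h where l: "l \<in> {s..r0} \<times> {-T..T} \<times> {-T..T}" "strict_mono h" "(q \<circ> h) \<longlonglongrightarrow> l"
      using seq_compactE qK by metis
    obtain rs al be where l_eq: "l = (rs, al, be)" by (cases l) auto
    have rk: "(\<lambda>k. rr (h k)) \<longlonglongrightarrow> rs" using tendsto_fst[OF l(3)] l_eq by (simp add: q_def o_def)
    have ak: "(\<lambda>k. tau a b (rr (h k)) (F (nn (h k)))) \<longlonglongrightarrow> al"
      using tendsto_fst[OF tendsto_snd[OF l(3)]] l_eq by (simp add: q_def o_def)
    have bk: "(\<lambda>k. tau a b (rr (h k)) f) \<longlonglongrightarrow> be"
      using tendsto_snd[OF tendsto_snd[OF l(3)]] l_eq by (simp add: q_def o_def)
    have rsS: "rs \<in> {s..r0}" and alT: "\<bar>al\<bar> \<le> T" and beT: "\<bar>be\<bar> \<le> T"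
      using l(1) l_eq by (auto simp: abs_le_iff)
    have rpos: "0 < rs" using rsS s by auto
    have rkb: "\<And>k. 0 \<le> rr (h k) \<and> rr (h k) \<le> r0" using nn(2) s by (smt (verit) atLeastAtMost_iff)
    have hk: "\<And>k. k \<le> nn (h k)" using seq_suble[OF l(2)] nn(1) le_trans by blast
    have aT: "\<And>k. \<bar>tau a b (rr (h k)) (F (nn (h k)))\<bar> \<le> T" using TF nn(2) by auto
    have bT: "\<And>k. \<bar>tau a b (rr (h k)) f\<bar> \<le> T" using Tf nn(2) by auto
    have cf: "(\<lambda>k. Phi a b (rr (h k)) f (tk k)) \<longlonglongrightarrow> Phi a b rs f x"
      if "tk \<longlonglongrightarrow> x" "\<And>k. \<bar>tk k\<bar> \<le> TT" for tk x TT
      using Phi_cont_seq[OF fm(1) fm(2) rkb rk rpos that] .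
    have bemin: "\<forall>u. Phi a b rs f be \<le> Phi a b rs f u"
    proof
      fix u
      show "Phi a b rs f be \<le> Phi a b rs f u"
      proof (rule LIMSEQ_le[OF cf[OF bk bT] cf[OF tendsto_const, of u "\<bar>u\<bar>"]])
        show "\<exists>N. \<forall>n\<ge>N. Phi a b (rr (h n)) f (tau a b (rr (h n)) f) \<le> Phi a b (rr (h n)) f u"
          using minf nn(2) by blast
      qed simp
    qed
    have conv: "(\<lambda>k. Phi a b (rr (h k)) (F (nn (h k))) (tk k)) \<longlonglongrightarrow> Phi a b rs f x"
      if "tk \<longlonglongrightarrow> x" "\<And>k. \<bar>tk k\<bar> \<le> T" for tk x
    proof -
      have "(\<lambda>k. (Phi a b (rr (h k)) (F (nn (h k))) (tk k) - Phi a b (rr (h k)) f (tk k))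
                 + Phi a b (rr (h k)) f (tk k)) \<longlonglongrightarrow> 0 + Phi a b rs f x"
        by (intro tendsto_add approx_seq[OF UA hk nn(2) that(2)] cf[OF that(1) that(2)])
      then show ?thesis by simp
    qed
    have "Phi a b rs f al \<le> Phi a b rs f be"
    proof (rule LIMSEQ_le[OF conv[OF ak aT] conv[OF bk bT]])
      show "\<exists>N. \<forall>n\<ge>N. Phi a b (rr (h n)) (F (nn (h n))) (tau a b (rr (h n)) (F (nn (h n))))
              \<le> Phi a b (rr (h n)) (F (nn (h n))) (tau a b (rr (h n)) f)"
        using minF nn(2) by blast
    qed
    then have almin: "\<forall>u. Phi a b rs f al \<le> Phi a b rs f u" using bemin by (meson order.trans)
    have "al = be" using uniqf[OF rsS almin] uniqf[OF rsS bemin] by simp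
    moreover have "\<epsilon> \<le> \<bar>al - be\<bar>"
    proof (rule LIMSEQ_le_const[OF tendsto_rabs[OF tendsto_diff[OF ak bk]]])
      show "\<exists>N. \<forall>n\<ge>N. \<epsilon> \<le> \<bar>tau a b (rr (h n)) (F (nn (h n))) - tau a b (rr (h n)) f\<bar>"
        using nn(3) by blast
    qed
    ultimately show False using \<epsilon>(1) by simp
  qed
qed

end
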